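(* Let $\mathfrak g$ be the $7$-dimensional real Lie algebra described in the context, with parameters $x,y,z,w$ and $A,B,C$, and let $\varphi=e^{127}+e^{347}+e^{567}+e^{135}-e^{146}-e^{236}-e^{245}$. Then $d\varphi=0$ if and only if $$\theta(A)\omega_1=\theta(B)\omega_7+x\omega_1+y\omega_2,\qquad \theta(A)\omega_2=\theta(C)\omega_7+z\omega_1+w\omega_2,\qquad \theta(B)\omega_2=\theta(C)\omega_1.$$
   Context: Let $\mathfrak g$ be a real Lie algebra with basis $\{e_1,\dots,e_7\}$ and dual basis $\{e^1,\dots,e^7\}$; write $e^{ij\cdots k}=e^i\wedge\cdots\wedge e^k$. Put $\mathfrak g_1=\mathrm{span}\{e_3,e_4,e_5,e_6\}$. The bracket is determined by $x,y,z,w\in\mathbb R$ and $A,B,C\in\mathfrak{gl}_4(\mathbb R)$ (matrices w.r.t. $e_3,\dots,e_6$) by: $[e_1,e_2]=0$, $[e_7,e_1]=xe_1+ye_2$, $[e_7,e_2]=ze_1+we_2$, $[e_7,v]=Av$, $[e_1,v]=Bv$, $[e_2,v]=Cv$ for $v\in\mathfrak g_1$, $[\mathfrak g_1,\mathfrak g_1]=0$; it is assumed that $\mathrm{tr}B=\mathrm{tr}C=0$, $[A,B]=xB+yC$, $[A,C]=zB+wC$, $[B,C]=0$. The exterior derivative on $\Lambda^k\mathfrak g^*$ is $d\alpha(X_0,\dots,X_k)=\sum_{i<j}(-1)^{i+j}\alpha([X_i,X_j],X_0,\dots,\widehat{X_i},\dots,\widehat{X_j},\dots,X_k)$. $\omega_7=e^{34}+e^{56}$,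 $\omega_1=e^{35}-e^{46}$, $\omega_2=-e^{36}-e^{45}$, regarded as elements of $\Lambda^2\mathfrak g_1^*$. For $M\in\mathfrak{gl}_4(\mathbb R)$, $\theta(M)$ is the derivation of $\Lambda\mathfrak g_1^*$ given by $\theta(M)\alpha(X_1,\dots,X_k)=-\sum_i\alpha(X_1,\dots,MX_i,\dots,X_k)$. *)

theory Defs
  imports Complex_Main "HOL-Combinatorics.Permutations"
begin

text \<open>Vectors of the Lie algebra g are coordinate functions w.r.t. e_1,...,e_7
  (indices 1..7); g_1 = span{e_3,...,e_6} corresponds to support in {3..6}.
  Matrices in gl_4(R) are indexed by {3..6} x {3..6}: entry M k j is the
  e_k-coordinate of M e_j.\<close>

type_synonym vec = "nat \<Rightarrow> real"
type_synonym mat4 = "nat \<Rightarrow> nat \<Rightarrow> real"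
type_synonym form = "vec list \<Rightarrow> real"

definition in_g :: "vec \<Rightarrow> bool" where
  "in_g X \<longleftrightarrow> (\<forall>i. i \<notin> {1..7} \<longrightarrow> X i = 0)"

definition in_g1 :: "vec \<Rightarrow> bool" where
  "in_g1 X \<longleftrightarrow> (\<forall>i. i \<notin> {3..6} \<longrightarrow> X i = 0)"

definition bvec :: "nat \<Rightarrow> vec" where
  "bvec i = (\<lambda>j. if j = i then 1 else 0)"

definition matapp :: "mat4 \<Rightarrow> vec \<Rightarrow> vec" where
  "matapp M X = (\<lambda>k. if k \<in> {3..6} then (\<Sum>j\<in>{3..6}. M k j * X j) else 0)"

definition mtrace :: "mat4 \<Rightarrow> real" where
  "mtrace M = (\<Sum>k\<in>{3..6}. M k k)"

definition mmul :: "mat4 \<Rightarrow> mat4 \<Rightarrow> mat4" where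
  "mmul M N = (\<lambda>i k. \<Sum>j\<in>{3..6}. M i j * N j k)"

definition mcomm :: "mat4 \<Rightarrow> mat4 \<Rightarrow> mat4" where
  "mcomm M N = (\<lambda>i k. mmul M N i k - mmul N M i k)"

text \<open>One-directional basis brackets [e_i,e_j] for the listed pairs (zero otherwise).\<close>
definition ad0 :: "real \<Rightarrow> real \<Rightarrow> real \<Rightarrow> real \<Rightarrow> mat4 \<Rightarrow> mat4 \<Rightarrow> mat4 \<Rightarrow> nat \<Rightarrow> nat \<Rightarrow> vec" where
  "ad0 x y z w A B C i j =
    (if i = 7 \<and> j = 1 then (\<lambda>k. x * bvec 1 k + y * bvec 2 k)
     else if i = 7 \<and> j = 2 then (\<lambda>k. z * bvec 1 k + w * bvec 2 k)
     else if i = 7 \<and> j \<in> {3..6} then matapp A (bvec j)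
     else if i = 1 \<and> j \<in> {3..6} then matapp B (bvec j)
     else if i = 2 \<and> j \<in> {3..6} then matapp C (bvec j)
     else (\<lambda>k. 0))"

definition brb :: "real \<Rightarrow> real \<Rightarrow> real \<Rightarrow> real \<Rightarrow> mat4 \<Rightarrow> mat4 \<Rightarrow> mat4 \<Rightarrow> nat \<Rightarrow> nat \<Rightarrow> vec" where
  "brb x y z w A B C i j = (\<lambda>k. ad0 x y z w A B C i j k - ad0 x y z w A B C j i k)"

definition lie_br :: "real \<Rightarrow> real \<Rightarrow> real \<Rightarrow> real \<Rightarrow> mat4 \<Rightarrow> mat4 \<Rightarrow> mat4 \<Rightarrow> vec \<Rightarrow> vec \<Rightarrow> vec" where
  "lie_br x y z w A B C X Y =
     (\<lambda>k. \<Sum>i\<in>{1..7}. \<Sum>j\<in>{1..7}. X i * Y j * brb x y z w A B C i j k)"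

definition eform :: "nat list \<Rightarrow> form" where
  "eform is Xs = (\<Sum>\<sigma>\<in>{\<sigma>. \<sigma> permutes {..<length is}}.
       of_int (sign \<sigma>) * (\<Prod>r<length is. (Xs ! (\<sigma> r)) (is ! r)))"

text \<open>Exterior derivative on g, formula from the context (X_0,...,X_k 0-indexed).\<close>
definition dext :: "real \<Rightarrow> real \<Rightarrow> real \<Rightarrow> real \<Rightarrow> mat4 \<Rightarrow> mat4 \<Rightarrow> mat4 \<Rightarrow> form \<Rightarrow> form" where
  "dext x y z w A B C \<alpha> Xs =
    (\<Sum>i<length Xs. \<Sum>j\<in>{i<..<length Xs}.
       (-1) ^ (i + j) * \<alpha> (lie_br x y z w A B C (Xs ! i) (Xs ! j)
                         # [Xs ! m. m \<leftarrow> [0..<length Xs], m \<noteq> i, m \<noteq> j]))"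

definition theta :: "mat4 \<Rightarrow> form \<Rightarrow> form" where
  "theta M \<alpha> Xs = - (\<Sum>i<length Xs. \<alpha> (Xs[i := matapp M (Xs ! i)]))"

definition phi :: form where
  "phi Xs = eform [1,2,7] Xs + eform [3,4,7] Xs + eform [5,6,7] Xs + eform [1,3,5] Xs
          - eform [1,4,6] Xs - eform [2,3,6] Xs - eform [2,4,5] Xs"

definition omega7 :: form where "omega7 Xs = eform [3,4] Xs + eform [5,6] Xs"
definition omega1 :: form where "omega1 Xs = eform [3,5] Xs - eform [4,6] Xs"
definition omega2 :: form where "omega2 Xs = - eform [3,6] Xs - eform [4,5] Xs"

end

theory Submission
  imports Defs
begin

lemma s7: "sum f {1..7::nat} = f 1 + f 2 + f 3 + f 4 + f 5 + f 6 + (f 7::real)"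
proof -
  have "{1..7::nat} = {1,2,3,4,5,6,7}" by auto
  then show ?thesis by (simp add: algebra_simps)
qed
lemma s36: "sum f {3..6::nat} = f 3 + f 4 + f 5 + (f 6::real)"
proof -
  have "{3..6::nat} = {3,4,5,6}" by auto
  then show ?thesis by (simp add: algebra_simps)
qed
lemma br1: "lie_br x y z w A B C X Y 1 = x * (X 7 * Y 1 - X 1 * Y 7) + z * (X 7 * Y 2 - X 2 * Y 7)"
  unfolding lie_br_def brb_def s7 by (simp add: ad0_def matapp_def bvec_def s36 algebra_simps)
lemma br2: "lie_br x y z w A B C X Y 2 = y * (X 7 * Y 1 - X 1 * Y 7) + w * (X 7 * Y 2 - X 2 * Y 7)"
  unfolding lie_br_def brb_def s7 by (simp add: ad0_def matapp_def bvec_def s36 algebra_simps)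
lemma br3: "lie_br x y z w A B C X Y 3 = A 3 3 * (X 7 * Y 3 - X 3 * Y 7) + A 3 4 * (X 7 * Y 4 - X 4 * Y 7) + A 3 5 * (X 7 * Y 5 - X 5 * Y 7) + A 3 6 * (X 7 * Y 6 - X 6 * Y 7) + B 3 3 * (X 1 * Y 3 - X 3 * Y 1) + B 3 4 * (X 1 * Y 4 - X 4 * Y 1) + B 3 5 * (X 1 * Y 5 - X 5 * Y 1) + B 3 6 * (X 1 * Y 6 - X 6 * Y 1) + C 3 3 * (X 2 * Y 3 - X 3 * Y 2) + C 3 4 * (X 2 * Y 4 - X 4 * Y 2) + C 3 5 * (X 2 * Y 5 - X 5 * Y 2) + C 3 6 * (X 2 * Y 6 - X 6 * Y 2)"
  unfolding lie_br_def brb_def s7 by (simp add: ad0_def matapp_def bvec_def s36 algebra_simps)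
lemma br4: "lie_br x y z w A B C X Y 4 = A 4 3 * (X 7 * Y 3 - X 3 * Y 7) + A 4 4 * (X 7 * Y 4 - X 4 * Y 7) + A 4 5 * (X 7 * Y 5 - X 5 * Y 7) + A 4 6 * (X 7 * Y 6 - X 6 * Y 7) + B 4 3 * (X 1 * Y 3 - X 3 * Y 1) + B 4 4 * (X 1 * Y 4 - X 4 * Y 1) + B 4 5 * (X 1 * Y 5 - X 5 * Y 1) + B 4 6 * (X 1 * Y 6 - X 6 * Y 1) + C 4 3 * (X 2 * Y 3 - X 3 * Y 2) + C 4 4 * (X 2 * Y 4 - X 4 * Y 2) + C 4 5 * (X 2 * Y 5 - X 5 * Y 2) + C 4 6 * (X 2 * Y 6 - X 6 * Y 2)"
  unfolding lie_br_def brb_def s7 by (simp add: ad0_def matapp_def bvec_def s36 algebra_simps)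
lemma br5: "lie_br x y z w A B C X Y 5 = A 5 3 * (X 7 * Y 3 - X 3 * Y 7) + A 5 4 * (X 7 * Y 4 - X 4 * Y 7) + A 5 5 * (X 7 * Y 5 - X 5 * Y 7) + A 5 6 * (X 7 * Y 6 - X 6 * Y 7) + B 5 3 * (X 1 * Y 3 - X 3 * Y 1) + B 5 4 * (X 1 * Y 4 - X 4 * Y 1) + B 5 5 * (X 1 * Y 5 - X 5 * Y 1) + B 5 6 * (X 1 * Y 6 - X 6 * Y 1) + C 5 3 * (X 2 * Y 3 - X 3 * Y 2) + C 5 4 * (X 2 * Y 4 - X 4 * Y 2) + C 5 5 * (X 2 * Y 5 - X 5 * Y 2) + C 5 6 * (X 2 * Y 6 - X 6 * Y 2)"
  unfolding lie_br_def brb_def s7 by (simp add: ad0_def matapp_def bvec_def s36 algebra_simps)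
lemma br6: "lie_br x y z w A B C X Y 6 = A 6 3 * (X 7 * Y 3 - X 3 * Y 7) + A 6 4 * (X 7 * Y 4 - X 4 * Y 7) + A 6 5 * (X 7 * Y 5 - X 5 * Y 7) + A 6 6 * (X 7 * Y 6 - X 6 * Y 7) + B 6 3 * (X 1 * Y 3 - X 3 * Y 1) + B 6 4 * (X 1 * Y 4 - X 4 * Y 1) + B 6 5 * (X 1 * Y 5 - X 5 * Y 1) + B 6 6 * (X 1 * Y 6 - X 6 * Y 1) + C 6 3 * (X 2 * Y 3 - X 3 * Y 2) + C 6 4 * (X 2 * Y 4 - X 4 * Y 2) + C 6 5 * (X 2 * Y 5 - X 5 * Y 2) + C 6 6 * (X 2 * Y 6 - X 6 * Y 2)"
  unfolding lie_br_def brb_def s7 by (simp add: ad0_def matapp_def bvec_def s36 algebra_simps)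
lemma br7: "lie_br x y z w A B C X Y 7 = 0"
  unfolding lie_br_def brb_def s7 by (simp add: ad0_def matapp_def bvec_def s36 algebra_simps)

lemma eform2: "eform [a,b] [U,V] = U a * V b - V a * U b"
proof -
  have f: "finite {1::nat}" "0 \<notin> {1::nat}" by auto
  have e: "{..<length [a,b]} = insert 0 {1::nat}" by auto
  show ?thesis
    unfolding eform_def e sum_over_permutations_insert[OF f] permutes_sing
    by (simp add: sign_swap_id sign_id swap_id_eq lessThan_Suc)
qed

lemma eform3: "eform [a,b,c] [U,V,W] =
   U a * V b * W c + V a * W b * U c + W a * U b * V c
 - U a * W b * V c - V a * U b * W c - W a * V b * U c"
proof -
  have f1: "finite {1::nat,2}" "0 \<notin> {1::nat,2}" by auto
  have f2: "finite {2::nat}" "1 \<notin> {2::nat}" by auto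
  have e: "{..<length [a,b,c]} = insert 0 {1::nat,2}" by auto
  show ?thesis
    unfolding eform_def e sum_over_permutations_insert[OF f1] sum_over_permutations_insert[OF f2] permutes_sing
    by (simp add: sign_swap_id permutation_swap_id sign_compose sign_id swap_id_eq lessThan_Suc algebra_simps)
qed
lemma dext4: "dext x y z w A B C \<alpha> [X0,X1,X2,X3] =
   - \<alpha> [lie_br x y z w A B C X0 X1, X2, X3] + \<alpha> [lie_br x y z w A B C X0 X2, X1, X3]
   - \<alpha> [lie_br x y z w A B C X0 X3, X1, X2] - \<alpha> [lie_br x y z w A B C X1 X2, X0, X3]
   + \<alpha> [lie_br x y z w A B C X1 X3, X0, X2] - \<alpha> [lie_br x y z w A B C X2 X3, X0, X1]"
proof -
  have a: "\<And>f. sum f {..<4::nat} = f 0 + f 1 + f 2 + (f 3::real)"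
    by (simp add: numeral_eq_Suc lessThan_Suc algebra_simps)
  have b: "\<And>f. sum f {0<..<4::nat} = f 1 + f 2 + (f 3::real)"
          "\<And>f. sum f {1<..<4::nat} = f 2 + (f 3::real)"
          "\<And>f. sum f {2<..<4::nat} = (f 3::real)"
          "\<And>f. sum f {3<..<4::nat} = (0::real)"
  proof -
    have e: "{0<..<4::nat} = {1,2,3}" "{1<..<4::nat} = {2,3}" "{2<..<4::nat} = {3}" "{3<..<4::nat} = {}" by auto
    show "\<And>f. sum f {0<..<4::nat} = f 1 + f 2 + (f 3::real)"
          "\<And>f. sum f {1<..<4::nat} = f 2 + (f 3::real)"
          "\<And>f. sum f {2<..<4::nat} = (f 3::real)"
          "\<And>f. sum f {3<..<4::nat} = (0::real)" unfolding e by (simp_all add: algebra_simps)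
  qed
  have c: "[0..<4] = [0,1,2,3]" by (simp add: upt_rec)
  have l: "length [X0,X1,X2,X3] = 4" by simp
  show ?thesis unfolding dext_def l a b c
    by (simp add: algebra_simps)
qed
lemma theta2: "theta M \<alpha> [X,Y] = - (\<alpha> [matapp M X, Y] + \<alpha> [X, matapp M Y])"
  unfolding theta_def by (simp add: lessThan_Suc)

definition pivs :: "real \<Rightarrow> real \<Rightarrow> real \<Rightarrow> real \<Rightarrow> mat4 \<Rightarrow> mat4 \<Rightarrow> mat4 \<Rightarrow> bool" where
  "pivs x y z w A B C \<longleftrightarrow>
    B 5 3 = B 6 4 + C 5 4 + C 6 3 \<and>
    B 4 3 = - B 6 5 - C 3 3 - C 5 5 \<and>
    B 3 3 = - B 6 6 + C 4 3 - C 5 6 \<and>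
    B 4 4 = - B 5 5 - C 3 4 + C 6 5 \<and>
    B 3 4 = - B 5 6 + C 4 4 + C 6 6 \<and>
    B 3 5 = B 4 6 + C 5 4 + C 6 3 + y + z \<and>
    A 5 4 = - A 6 3 - B 5 5 - B 6 6 - C 3 4 + C 4 3 - C 5 6 + C 6 5 \<and>
    A 3 3 = - A 6 6 - C 4 6 - C 5 3 - w \<and>
    A 4 3 = - A 6 5 - C 4 5 + C 6 3 + z \<and>
    A 3 4 = A 6 5 - B 4 6 - B 6 4 - C 5 4 - C 6 3 - z \<and>
    A 4 4 = - A 6 6 - B 4 5 + B 6 3 + C 3 5 - C 4 6 - C 5 3 + C 6 4 - 2 * w + x \<and>
    A 3 6 = - A 4 5 - B 5 5 - B 6 6 \<and>
    A 5 3 = A 6 4 + C 3 3 + C 4 4 \<and>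
    A 5 6 = - A 6 5 + B 4 6 + B 6 4 - C 4 5 + C 5 4 + 2 * C 6 3 + y + z \<and>
    A 5 5 = A 6 6 + B 4 5 - B 6 3 + C 4 6 + C 5 3 + w - x \<and>
    B 3 6 = - B 4 5 + B 5 4 + B 6 3 + C 3 5 - C 4 6 - C 5 3 + C 6 4 - 2 * w + 2 * x \<and>
    C 3 6 = - C 4 5 + C 5 4 + C 6 3 + y + z \<and>
    A 3 5 = A 4 6 - C 5 5 - C 6 6"

lemma backward0:
  fixes x y z w :: real and A B C :: mat4
  assumes "B 5 3 = B 6 4 + C 5 4 + C 6 3"
    and "B 4 3 = - B 6 5 - C 3 3 - C 5 5"
    and "B 3 3 = - B 6 6 + C 4 3 - C 5 6"
    and "B 4 4 = - B 5 5 - C 3 4 + C 6 5"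
    and "B 3 4 = - B 5 6 + C 4 4 + C 6 6"
    and "B 3 5 = B 4 6 + C 5 4 + C 6 3 + y + z"
    and "A 5 4 = - A 6 3 - B 5 5 - B 6 6 - C 3 4 + C 4 3 - C 5 6 + C 6 5"
    and "A 3 3 = - A 6 6 - C 4 6 - C 5 3 - w"
    and "A 4 3 = - A 6 5 - C 4 5 + C 6 3 + z"
    and "A 3 4 = A 6 5 - B 4 6 - B 6 4 - C 5 4 - C 6 3 - z"
    and "A 4 4 = - A 6 6 - B 4 5 + B 6 3 + C 3 5 - C 4 6 - C 5 3 + C 6 4 - 2 * w + x"
    and "A 3 6 = - A 4 5 - B 5 5 - B 6 6"
    and "A 5 3 = A 6 4 + C 3 3 + C 4 4"
    and "A 5 6 = - A 6 5 + B 4 6 + B 6 4 - C 4 5 + C 5 4 + 2 * C 6 3 + y + z"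
    and "A 5 5 = A 6 6 + B 4 5 - B 6 3 + C 4 6 + C 5 3 + w - x"
    and "B 3 6 = - B 4 5 + B 5 4 + B 6 3 + C 3 5 - C 4 6 - C 5 3 + C 6 4 - 2 * w + 2 * x"
    and "C 3 6 = - C 4 5 + C 5 4 + C 6 3 + y + z"
    and "A 3 5 = A 4 6 - C 5 5 - C 6 6"
  shows "dext x y z w A B C phi [X0,X1,X2,X3] = 0"
  unfolding dext4 phi_def eform3 br1 br2 br3 br4 br5 br6 br7 assms
  by algebra

lemma backward:
  assumes "pivs x y z w A B C" and "length Xs = 4"
  shows "dext x y z w A B C phi Xs = 0"
proof -
  obtain X0 X1 X2 X3 where "Xs = [X0,X1,X2,X3]"
    using assms(2) by (auto simp: numeral_eq_Suc length_Suc_conv)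
  then show ?thesis
    apply simp
    apply (rule backward0)
    using assms(1) unfolding pivs_def by auto
qed

lemma ing_bvec: "i \<in> {1..7} \<Longrightarrow> in_g (bvec i)"
  by (simp add: in_g_def bvec_def)

lemma ing1_bvec: "i \<in> {3..6} \<Longrightarrow> in_g1 (bvec i)"
  by (simp add: in_g1_def bvec_def)

lemma forward:
  assumes H: "\<forall>Xs. length Xs = 4 \<and> (\<forall>X\<in>set Xs. in_g X) \<longrightarrow> dext x y z w A B C phi Xs = 0"
  shows "pivs x y z w A B C"
proof -
  have d0: "- B 5 3 + B 6 4 + C 5 4 + C 6 3 = 0"
  proof -
    have h: "dext x y z w A B C phi [bvec 1, bvec 2, bvec 3, bvec 4] = 0"
      using H ing_bvec[of 1] ing_bvec[of 2] ing_bvec[of 3] ing_bvec[of 4] by simp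
    have "dext x y z w A B C phi [bvec 1, bvec 2, bvec 3, bvec 4] = - B 5 3 + B 6 4 + C 5 4 + C 6 3"
      unfolding dext4 phi_def eform3 br1 br2 br3 br4 br5 br6 br7 by (simp add: bvec_def algebra_simps)
    with h show ?thesis by simp
  qed
  have d1: "B 4 3 + B 6 5 + C 3 3 + C 5 5 = 0"
  proof -
    have h: "dext x y z w A B C phi [bvec 1, bvec 2, bvec 3, bvec 5] = 0"
      using H ing_bvec[of 1] ing_bvec[of 2] ing_bvec[of 3] ing_bvec[of 5] by simp
    have "dext x y z w A B C phi [bvec 1, bvec 2, bvec 3, bvec 5] = B 4 3 + B 6 5 + C 3 3 + C 5 5"
      unfolding dext4 phi_def eform3 br1 br2 br3 br4 br5 br6 br7 by (simp add: bvec_def algebra_simps)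
    with h show ?thesis by simp
  qed
  have d2: "B 3 3 + B 6 6 - C 4 3 + C 5 6 = 0"
  proof -
    have h: "dext x y z w A B C phi [bvec 1, bvec 2, bvec 3, bvec 6] = 0"
      using H ing_bvec[of 1] ing_bvec[of 2] ing_bvec[of 3] ing_bvec[of 6] by simp
    have "dext x y z w A B C phi [bvec 1, bvec 2, bvec 3, bvec 6] = B 3 3 + B 6 6 - C 4 3 + C 5 6"
      unfolding dext4 phi_def eform3 br1 br2 br3 br4 br5 br6 br7 by (simp add: bvec_def algebra_simps)
    with h show ?thesis by simp
  qed
  have d3: "B 4 4 + B 5 5 + C 3 4 - C 6 5 = 0"
  proof -
    have h: "dext x y z w A B C phi [bvec 1, bvec 2, bvec 4, bvec 5] = 0"
      using H ing_bvec[of 1] ing_bvec[of 2] ing_bvec[of 4] ing_bvec[of 5] by simp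
    have "dext x y z w A B C phi [bvec 1, bvec 2, bvec 4, bvec 5] = B 4 4 + B 5 5 + C 3 4 - C 6 5"
      unfolding dext4 phi_def eform3 br1 br2 br3 br4 br5 br6 br7 by (simp add: bvec_def algebra_simps)
    with h show ?thesis by simp
  qed
  have d4: "B 3 4 + B 5 6 - C 4 4 - C 6 6 = 0"
  proof -
    have h: "dext x y z w A B C phi [bvec 1, bvec 2, bvec 4, bvec 6] = 0"
      using H ing_bvec[of 1] ing_bvec[of 2] ing_bvec[of 4] ing_bvec[of 6] by simp
    have "dext x y z w A B C phi [bvec 1, bvec 2, bvec 4, bvec 6] = B 3 4 + B 5 6 - C 4 4 - C 6 6"
      unfolding dext4 phi_def eform3 br1 br2 br3 br4 br5 br6 br7 by (simp add: bvec_def algebra_simps)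
    with h show ?thesis by simp
  qed
  have d5: "B 3 5 - B 4 6 - C 3 6 - C 4 5 = 0"
  proof -
    have h: "dext x y z w A B C phi [bvec 1, bvec 2, bvec 5, bvec 6] = 0"
      using H ing_bvec[of 1] ing_bvec[of 2] ing_bvec[of 5] ing_bvec[of 6] by simp
    have "dext x y z w A B C phi [bvec 1, bvec 2, bvec 5, bvec 6] = B 3 5 - B 4 6 - C 3 6 - C 4 5"
      unfolding dext4 phi_def eform3 br1 br2 br3 br4 br5 br6 br7 by (simp add: bvec_def algebra_simps)
    with h show ?thesis by simp
  qed
  have d6: "A 5 4 + A 6 3 - B 3 3 - B 4 4 = 0"
  proof -
    have h: "dext x y z w A B C phi [bvec 1, bvec 3, bvec 4, bvec 7] = 0"
      using H ing_bvec[of 1] ing_bvec[of 3] ing_bvec[of 4] ing_bvec[of 7] by simp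
    have "dext x y z w A B C phi [bvec 1, bvec 3, bvec 4, bvec 7] = A 5 4 + A 6 3 - B 3 3 - B 4 4"
      unfolding dext4 phi_def eform3 br1 br2 br3 br4 br5 br6 br7 by (simp add: bvec_def algebra_simps)
    with h show ?thesis by simp
  qed
  have d7: "A 3 3 + A 5 5 - B 4 5 + B 6 3 + x = 0"
  proof -
    have h: "dext x y z w A B C phi [bvec 1, bvec 3, bvec 5, bvec 7] = 0"
      using H ing_bvec[of 1] ing_bvec[of 3] ing_bvec[of 5] ing_bvec[of 7] by simp
    have "dext x y z w A B C phi [bvec 1, bvec 3, bvec 5, bvec 7] = A 3 3 + A 5 5 - B 4 5 + B 6 3 + x"
      unfolding dext4 phi_def eform3 br1 br2 br3 br4 br5 br6 br7 by (simp add: bvec_def algebra_simps)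
    with h show ?thesis by simp
  qed
  have d8: "- A 4 3 + A 5 6 - B 4 6 - B 5 3 - y = 0"
  proof -
    have h: "dext x y z w A B C phi [bvec 1, bvec 3, bvec 6, bvec 7] = 0"
      using H ing_bvec[of 1] ing_bvec[of 3] ing_bvec[of 6] ing_bvec[of 7] by simp
    have "dext x y z w A B C phi [bvec 1, bvec 3, bvec 6, bvec 7] = - A 4 3 + A 5 6 - B 4 6 - B 5 3 - y"
      unfolding dext4 phi_def eform3 br1 br2 br3 br4 br5 br6 br7 by (simp add: bvec_def algebra_simps)
    with h show ?thesis by simp
  qed
  have d9: "A 3 4 - A 6 5 + B 3 5 + B 6 4 - y = 0"
  proof -
    have h: "dext x y z w A B C phi [bvec 1, bvec 4, bvec 5, bvec 7] = 0"
      using H ing_bvec[of 1] ing_bvec[of 4] ing_bvec[of 5] ing_bvec[of 7] by simp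
    have "dext x y z w A B C phi [bvec 1, bvec 4, bvec 5, bvec 7] = A 3 4 - A 6 5 + B 3 5 + B 6 4 - y"
      unfolding dext4 phi_def eform3 br1 br2 br3 br4 br5 br6 br7 by (simp add: bvec_def algebra_simps)
    with h show ?thesis by simp
  qed
  have d10: "- A 4 4 - A 6 6 + B 3 6 - B 5 4 - x = 0"
  proof -
    have h: "dext x y z w A B C phi [bvec 1, bvec 4, bvec 6, bvec 7] = 0"
      using H ing_bvec[of 1] ing_bvec[of 4] ing_bvec[of 6] ing_bvec[of 7] by simp
    have "dext x y z w A B C phi [bvec 1, bvec 4, bvec 6, bvec 7] = - A 4 4 - A 6 6 + B 3 6 - B 5 4 - x"
      unfolding dext4 phi_def eform3 br1 br2 br3 br4 br5 br6 br7 by (simp add: bvec_def algebra_simps)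
    with h show ?thesis by simp
  qed
  have d11: "- A 3 6 - A 4 5 - B 5 5 - B 6 6 = 0"
  proof -
    have h: "dext x y z w A B C phi [bvec 1, bvec 5, bvec 6, bvec 7] = 0"
      using H ing_bvec[of 1] ing_bvec[of 5] ing_bvec[of 6] ing_bvec[of 7] by simp
    have "dext x y z w A B C phi [bvec 1, bvec 5, bvec 6, bvec 7] = - A 3 6 - A 4 5 - B 5 5 - B 6 6"
      unfolding dext4 phi_def eform3 br1 br2 br3 br4 br5 br6 br7 by (simp add: bvec_def algebra_simps)
    with h show ?thesis by simp
  qed
  have d12: "A 5 3 - A 6 4 - C 3 3 - C 4 4 = 0"
  proof -
    have h: "dext x y z w A B C phi [bvec 2, bvec 3, bvec 4, bvec 7] = 0"
      using H ing_bvec[of 2] ing_bvec[of 3] ing_bvec[of 4] ing_bvec[of 7] by simp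
    have "dext x y z w A B C phi [bvec 2, bvec 3, bvec 4, bvec 7] = A 5 3 - A 6 4 - C 3 3 - C 4 4"
      unfolding dext4 phi_def eform3 br1 br2 br3 br4 br5 br6 br7 by (simp add: bvec_def algebra_simps)
    with h show ?thesis by simp
  qed
  have d13: "- A 4 3 - A 6 5 - C 4 5 + C 6 3 + z = 0"
  proof -
    have h: "dext x y z w A B C phi [bvec 2, bvec 3, bvec 5, bvec 7] = 0"
      using H ing_bvec[of 2] ing_bvec[of 3] ing_bvec[of 5] ing_bvec[of 7] by simp
    have "dext x y z w A B C phi [bvec 2, bvec 3, bvec 5, bvec 7] = - A 4 3 - A 6 5 - C 4 5 + C 6 3 + z"
      unfolding dext4 phi_def eform3 br1 br2 br3 br4 br5 br6 br7 by (simp add: bvec_def algebra_simps)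
    with h show ?thesis by simp
  qed
  have d14: "- A 3 3 - A 6 6 - C 4 6 - C 5 3 - w = 0"
  proof -
    have h: "dext x y z w A B C phi [bvec 2, bvec 3, bvec 6, bvec 7] = 0"
      using H ing_bvec[of 2] ing_bvec[of 3] ing_bvec[of 6] ing_bvec[of 7] by simp
    have "dext x y z w A B C phi [bvec 2, bvec 3, bvec 6, bvec 7] = - A 3 3 - A 6 6 - C 4 6 - C 5 3 - w"
      unfolding dext4 phi_def eform3 br1 br2 br3 br4 br5 br6 br7 by (simp add: bvec_def algebra_simps)
    with h show ?thesis by simp
  qed
  have d15: "- A 4 4 - A 5 5 + C 3 5 + C 6 4 - w = 0"
  proof -
    have h: "dext x y z w A B C phi [bvec 2, bvec 4, bvec 5, bvec 7] = 0"
      using H ing_bvec[of 2] ing_bvec[of 4] ing_bvec[of 5] ing_bvec[of 7] by simp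
    have "dext x y z w A B C phi [bvec 2, bvec 4, bvec 5, bvec 7] = - A 4 4 - A 5 5 + C 3 5 + C 6 4 - w"
      unfolding dext4 phi_def eform3 br1 br2 br3 br4 br5 br6 br7 by (simp add: bvec_def algebra_simps)
    with h show ?thesis by simp
  qed
  have d16: "- A 3 4 - A 5 6 + C 3 6 - C 5 4 - z = 0"
  proof -
    have h: "dext x y z w A B C phi [bvec 2, bvec 4, bvec 6, bvec 7] = 0"
      using H ing_bvec[of 2] ing_bvec[of 4] ing_bvec[of 6] ing_bvec[of 7] by simp
    have "dext x y z w A B C phi [bvec 2, bvec 4, bvec 6, bvec 7] = - A 3 4 - A 5 6 + C 3 6 - C 5 4 - z"
      unfolding dext4 phi_def eform3 br1 br2 br3 br4 br5 br6 br7 by (simp add: bvec_def algebra_simps)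
    with h show ?thesis by simp
  qed
  have d17: "- A 3 5 + A 4 6 - C 5 5 - C 6 6 = 0"
  proof -
    have h: "dext x y z w A B C phi [bvec 2, bvec 5, bvec 6, bvec 7] = 0"
      using H ing_bvec[of 2] ing_bvec[of 5] ing_bvec[of 6] ing_bvec[of 7] by simp
    have "dext x y z w A B C phi [bvec 2, bvec 5, bvec 6, bvec 7] = - A 3 5 + A 4 6 - C 5 5 - C 6 6"
      unfolding dext4 phi_def eform3 br1 br2 br3 br4 br5 br6 br7 by (simp add: bvec_def algebra_simps)
    with h show ?thesis by simp
  qed
  show ?thesis unfolding pivs_def
    apply (intro conjI)
    using d0 d1 d2 d3 d4 d5 d6 d7 d8 d9 d10 d11 d12 d13 d14 d15 d16 d17 by linarith+
qed

lemma cforward: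
  assumes H1: "\<forall>X Y. in_g1 X \<and> in_g1 Y \<longrightarrow> theta A omega1 [X, Y] = theta B omega7 [X, Y] + x * omega1 [X, Y] + y * omega2 [X, Y]"
    and H2: "\<forall>X Y. in_g1 X \<and> in_g1 Y \<longrightarrow> theta A omega2 [X, Y] = theta C omega7 [X, Y] + z * omega1 [X, Y] + w * omega2 [X, Y]"
    and H3: "\<forall>X Y. in_g1 X \<and> in_g1 Y \<longrightarrow> theta B omega2 [X, Y] = theta C omega1 [X, Y]"
  shows "pivs x y z w A B C"
proof -
  have c1: "- A 5 4 - A 6 3 + B 3 3 + B 4 4 = 0"
  proof -
    have h: "theta A omega1 [bvec 3, bvec 4] = theta B omega7 [bvec 3, bvec 4] + x * omega1 [bvec 3, bvec 4] + y * omega2 [bvec 3, bvec 4]"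
      using H1 ing1_bvec[of 3] ing1_bvec[of 4] by simp
    have "(theta A omega1 [bvec 3, bvec 4]) - (theta B omega7 [bvec 3, bvec 4] + x * omega1 [bvec 3, bvec 4] + y * omega2 [bvec 3, bvec 4]) = - A 5 4 - A 6 3 + B 3 3 + B 4 4"
      unfolding theta2 omega1_def omega2_def omega7_def eform2 matapp_def by (simp add: bvec_def s36 algebra_simps)
    with h show ?thesis by simp
  qed
  have c2: "- A 5 3 + A 6 4 + C 3 3 + C 4 4 = 0"
  proof -
    have h: "theta A omega2 [bvec 3, bvec 4] = theta C omega7 [bvec 3, bvec 4] + z * omega1 [bvec 3, bvec 4] + w * omega2 [bvec 3, bvec 4]"
      using H2 ing1_bvec[of 3] ing1_bvec[of 4] by simp
    have "(theta A omega2 [bvec 3, bvec 4]) - (theta C omega7 [bvec 3, bvec 4] + z * omega1 [bvec 3, bvec 4] + w * omega2 [bvec 3, bvec 4]) = - A 5 3 + A 6 4 + C 3 3 + C 4 4"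
      unfolding theta2 omega1_def omega2_def omega7_def eform2 matapp_def by (simp add: bvec_def s36 algebra_simps)
    with h show ?thesis by simp
  qed
  have c3: "- B 5 3 + B 6 4 + C 5 4 + C 6 3 = 0"
  proof -
    have h: "theta B omega2 [bvec 3, bvec 4] = theta C omega1 [bvec 3, bvec 4]"
      using H3 ing1_bvec[of 3] ing1_bvec[of 4] by simp
    have "(theta B omega2 [bvec 3, bvec 4]) - (theta C omega1 [bvec 3, bvec 4]) = - B 5 3 + B 6 4 + C 5 4 + C 6 3"
      unfolding theta2 omega1_def omega2_def omega7_def eform2 matapp_def by (simp add: bvec_def s36 algebra_simps)
    with h show ?thesis by simp
  qed
  have c4: "- A 3 3 - A 5 5 + B 4 5 - B 6 3 - x = 0"
  proof -
    have h: "theta A omega1 [bvec 3, bvec 5] = theta B omega7 [bvec 3, bvec 5] + x * omega1 [bvec 3, bvec 5] + y * omega2 [bvec 3, bvec 5]"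
      using H1 ing1_bvec[of 3] ing1_bvec[of 5] by simp
    have "(theta A omega1 [bvec 3, bvec 5]) - (theta B omega7 [bvec 3, bvec 5] + x * omega1 [bvec 3, bvec 5] + y * omega2 [bvec 3, bvec 5]) = - A 3 3 - A 5 5 + B 4 5 - B 6 3 - x"
      unfolding theta2 omega1_def omega2_def omega7_def eform2 matapp_def by (simp add: bvec_def s36 algebra_simps)
    with h show ?thesis by simp
  qed
  have c5: "A 4 3 + A 6 5 + C 4 5 - C 6 3 - z = 0"
  proof -
    have h: "theta A omega2 [bvec 3, bvec 5] = theta C omega7 [bvec 3, bvec 5] + z * omega1 [bvec 3, bvec 5] + w * omega2 [bvec 3, bvec 5]"
      using H2 ing1_bvec[of 3] ing1_bvec[of 5] by simp
    have "(theta A omega2 [bvec 3, bvec 5]) - (theta C omega7 [bvec 3, bvec 5] + z * omega1 [bvec 3, bvec 5] + w * omega2 [bvec 3, bvec 5]) = A 4 3 + A 6 5 + C 4 5 - C 6 3 - z"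
      unfolding theta2 omega1_def omega2_def omega7_def eform2 matapp_def by (simp add: bvec_def s36 algebra_simps)
    with h show ?thesis by simp
  qed
  have c6: "B 4 3 + B 6 5 + C 3 3 + C 5 5 = 0"
  proof -
    have h: "theta B omega2 [bvec 3, bvec 5] = theta C omega1 [bvec 3, bvec 5]"
      using H3 ing1_bvec[of 3] ing1_bvec[of 5] by simp
    have "(theta B omega2 [bvec 3, bvec 5]) - (theta C omega1 [bvec 3, bvec 5]) = B 4 3 + B 6 5 + C 3 3 + C 5 5"
      unfolding theta2 omega1_def omega2_def omega7_def eform2 matapp_def by (simp add: bvec_def s36 algebra_simps)
    with h show ?thesis by simp
  qed
  have c7: "A 4 3 - A 5 6 + B 4 6 + B 5 3 + y = 0"
  proof -
    have h: "theta A omega1 [bvec 3, bvec 6] = theta B omega7 [bvec 3, bvec 6] + x * omega1 [bvec 3, bvec 6] + y * omega2 [bvec 3, bvec 6]"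
      using H1 ing1_bvec[of 3] ing1_bvec[of 6] by simp
    have "(theta A omega1 [bvec 3, bvec 6]) - (theta B omega7 [bvec 3, bvec 6] + x * omega1 [bvec 3, bvec 6] + y * omega2 [bvec 3, bvec 6]) = A 4 3 - A 5 6 + B 4 6 + B 5 3 + y"
      unfolding theta2 omega1_def omega2_def omega7_def eform2 matapp_def by (simp add: bvec_def s36 algebra_simps)
    with h show ?thesis by simp
  qed
  have c8: "A 3 3 + A 6 6 + C 4 6 + C 5 3 + w = 0"
  proof -
    have h: "theta A omega2 [bvec 3, bvec 6] = theta C omega7 [bvec 3, bvec 6] + z * omega1 [bvec 3, bvec 6] + w * omega2 [bvec 3, bvec 6]"
      using H2 ing1_bvec[of 3] ing1_bvec[of 6] by simp
    have "(theta A omega2 [bvec 3, bvec 6]) - (theta C omega7 [bvec 3, bvec 6] + z * omega1 [bvec 3, bvec 6] + w * omega2 [bvec 3, bvec 6]) = A 3 3 + A 6 6 + C 4 6 + C 5 3 + w"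
      unfolding theta2 omega1_def omega2_def omega7_def eform2 matapp_def by (simp add: bvec_def s36 algebra_simps)
    with h show ?thesis by simp
  qed
  have c9: "B 3 3 + B 6 6 - C 4 3 + C 5 6 = 0"
  proof -
    have h: "theta B omega2 [bvec 3, bvec 6] = theta C omega1 [bvec 3, bvec 6]"
      using H3 ing1_bvec[of 3] ing1_bvec[of 6] by simp
    have "(theta B omega2 [bvec 3, bvec 6]) - (theta C omega1 [bvec 3, bvec 6]) = B 3 3 + B 6 6 - C 4 3 + C 5 6"
      unfolding theta2 omega1_def omega2_def omega7_def eform2 matapp_def by (simp add: bvec_def s36 algebra_simps)
    with h show ?thesis by simp
  qed
  have c10: "- A 3 4 + A 6 5 - B 3 5 - B 6 4 + y = 0"
  proof -
    have h: "theta A omega1 [bvec 4, bvec 5] = theta B omega7 [bvec 4, bvec 5] + x * omega1 [bvec 4, bvec 5] + y * omega2 [bvec 4, bvec 5]"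
      using H1 ing1_bvec[of 4] ing1_bvec[of 5] by simp
    have "(theta A omega1 [bvec 4, bvec 5]) - (theta B omega7 [bvec 4, bvec 5] + x * omega1 [bvec 4, bvec 5] + y * omega2 [bvec 4, bvec 5]) = - A 3 4 + A 6 5 - B 3 5 - B 6 4 + y"
      unfolding theta2 omega1_def omega2_def omega7_def eform2 matapp_def by (simp add: bvec_def s36 algebra_simps)
    with h show ?thesis by simp
  qed
  have c11: "A 4 4 + A 5 5 - C 3 5 - C 6 4 + w = 0"
  proof -
    have h: "theta A omega2 [bvec 4, bvec 5] = theta C omega7 [bvec 4, bvec 5] + z * omega1 [bvec 4, bvec 5] + w * omega2 [bvec 4, bvec 5]"
      using H2 ing1_bvec[of 4] ing1_bvec[of 5] by simp
    have "(theta A omega2 [bvec 4, bvec 5]) - (theta C omega7 [bvec 4, bvec 5] + z * omega1 [bvec 4, bvec 5] + w * omega2 [bvec 4, bvec 5]) = A 4 4 + A 5 5 - C 3 5 - C 6 4 + w"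
      unfolding theta2 omega1_def omega2_def omega7_def eform2 matapp_def by (simp add: bvec_def s36 algebra_simps)
    with h show ?thesis by simp
  qed
  have c12: "B 4 4 + B 5 5 + C 3 4 - C 6 5 = 0"
  proof -
    have h: "theta B omega2 [bvec 4, bvec 5] = theta C omega1 [bvec 4, bvec 5]"
      using H3 ing1_bvec[of 4] ing1_bvec[of 5] by simp
    have "(theta B omega2 [bvec 4, bvec 5]) - (theta C omega1 [bvec 4, bvec 5]) = B 4 4 + B 5 5 + C 3 4 - C 6 5"
      unfolding theta2 omega1_def omega2_def omega7_def eform2 matapp_def by (simp add: bvec_def s36 algebra_simps)
    with h show ?thesis by simp
  qed
  have c13: "A 4 4 + A 6 6 - B 3 6 + B 5 4 + x = 0"
  proof -
    have h: "theta A omega1 [bvec 4, bvec 6] = theta B omega7 [bvec 4, bvec 6] + x * omega1 [bvec 4, bvec 6] + y * omega2 [bvec 4, bvec 6]"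
      using H1 ing1_bvec[of 4] ing1_bvec[of 6] by simp
    have "(theta A omega1 [bvec 4, bvec 6]) - (theta B omega7 [bvec 4, bvec 6] + x * omega1 [bvec 4, bvec 6] + y * omega2 [bvec 4, bvec 6]) = A 4 4 + A 6 6 - B 3 6 + B 5 4 + x"
      unfolding theta2 omega1_def omega2_def omega7_def eform2 matapp_def by (simp add: bvec_def s36 algebra_simps)
    with h show ?thesis by simp
  qed
  have c14: "A 3 4 + A 5 6 - C 3 6 + C 5 4 + z = 0"
  proof -
    have h: "theta A omega2 [bvec 4, bvec 6] = theta C omega7 [bvec 4, bvec 6] + z * omega1 [bvec 4, bvec 6] + w * omega2 [bvec 4, bvec 6]"
      using H2 ing1_bvec[of 4] ing1_bvec[of 6] by simp
    have "(theta A omega2 [bvec 4, bvec 6]) - (theta C omega7 [bvec 4, bvec 6] + z * omega1 [bvec 4, bvec 6] + w * omega2 [bvec 4, bvec 6]) = A 3 4 + A 5 6 - C 3 6 + C 5 4 + z"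
      unfolding theta2 omega1_def omega2_def omega7_def eform2 matapp_def by (simp add: bvec_def s36 algebra_simps)
    with h show ?thesis by simp
  qed
  have c15: "B 3 4 + B 5 6 - C 4 4 - C 6 6 = 0"
  proof -
    have h: "theta B omega2 [bvec 4, bvec 6] = theta C omega1 [bvec 4, bvec 6]"
      using H3 ing1_bvec[of 4] ing1_bvec[of 6] by simp
    have "(theta B omega2 [bvec 4, bvec 6]) - (theta C omega1 [bvec 4, bvec 6]) = B 3 4 + B 5 6 - C 4 4 - C 6 6"
      unfolding theta2 omega1_def omega2_def omega7_def eform2 matapp_def by (simp add: bvec_def s36 algebra_simps)
    with h show ?thesis by simp
  qed
  have c16: "A 3 6 + A 4 5 + B 5 5 + B 6 6 = 0"
  proof -
    have h: "theta A omega1 [bvec 5, bvec 6] = theta B omega7 [bvec 5, bvec 6] + x * omega1 [bvec 5, bvec 6] + y * omega2 [bvec 5, bvec 6]"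
      using H1 ing1_bvec[of 5] ing1_bvec[of 6] by simp
    have "(theta A omega1 [bvec 5, bvec 6]) - (theta B omega7 [bvec 5, bvec 6] + x * omega1 [bvec 5, bvec 6] + y * omega2 [bvec 5, bvec 6]) = A 3 6 + A 4 5 + B 5 5 + B 6 6"
      unfolding theta2 omega1_def omega2_def omega7_def eform2 matapp_def by (simp add: bvec_def s36 algebra_simps)
    with h show ?thesis by simp
  qed
  have c17: "A 3 5 - A 4 6 + C 5 5 + C 6 6 = 0"
  proof -
    have h: "theta A omega2 [bvec 5, bvec 6] = theta C omega7 [bvec 5, bvec 6] + z * omega1 [bvec 5, bvec 6] + w * omega2 [bvec 5, bvec 6]"
      using H2 ing1_bvec[of 5] ing1_bvec[of 6] by simp
    have "(theta A omega2 [bvec 5, bvec 6]) - (theta C omega7 [bvec 5, bvec 6] + z * omega1 [bvec 5, bvec 6] + w * omega2 [bvec 5, bvec 6]) = A 3 5 - A 4 6 + C 5 5 + C 6 6"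
      unfolding theta2 omega1_def omega2_def omega7_def eform2 matapp_def by (simp add: bvec_def s36 algebra_simps)
    with h show ?thesis by simp
  qed
  have c18: "B 3 5 - B 4 6 - C 3 6 - C 4 5 = 0"
  proof -
    have h: "theta B omega2 [bvec 5, bvec 6] = theta C omega1 [bvec 5, bvec 6]"
      using H3 ing1_bvec[of 5] ing1_bvec[of 6] by simp
    have "(theta B omega2 [bvec 5, bvec 6]) - (theta C omega1 [bvec 5, bvec 6]) = B 3 5 - B 4 6 - C 3 6 - C 4 5"
      unfolding theta2 omega1_def omega2_def omega7_def eform2 matapp_def by (simp add: bvec_def s36 algebra_simps)
    with h show ?thesis by simp
  qed
  show ?thesis unfolding pivs_def
    apply (intro conjI)
    using c1 c2 c3 c4 c5 c6 c7 c8 c9 c10 c11 c12 c13 c14 c15 c16 c17 c18 by linarith+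
qed

lemma cback1:
  fixes x y z w :: real and A B C :: mat4
  assumes "B 5 3 = B 6 4 + C 5 4 + C 6 3"
    and "B 4 3 = - B 6 5 - C 3 3 - C 5 5"
    and "B 3 3 = - B 6 6 + C 4 3 - C 5 6"
    and "B 4 4 = - B 5 5 - C 3 4 + C 6 5"
    and "B 3 4 = - B 5 6 + C 4 4 + C 6 6"
    and "B 3 5 = B 4 6 + C 5 4 + C 6 3 + y + z"
    and "A 5 4 = - A 6 3 - B 5 5 - B 6 6 - C 3 4 + C 4 3 - C 5 6 + C 6 5"
    and "A 3 3 = - A 6 6 - C 4 6 - C 5 3 - w"
    and "A 4 3 = - A 6 5 - C 4 5 + C 6 3 + z"
    and "A 3 4 = A 6 5 - B 4 6 - B 6 4 - C 5 4 - C 6 3 - z"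
    and "A 4 4 = - A 6 6 - B 4 5 + B 6 3 + C 3 5 - C 4 6 - C 5 3 + C 6 4 - 2 * w + x"
    and "A 3 6 = - A 4 5 - B 5 5 - B 6 6"
    and "A 5 3 = A 6 4 + C 3 3 + C 4 4"
    and "A 5 6 = - A 6 5 + B 4 6 + B 6 4 - C 4 5 + C 5 4 + 2 * C 6 3 + y + z"
    and "A 5 5 = A 6 6 + B 4 5 - B 6 3 + C 4 6 + C 5 3 + w - x"
    and "B 3 6 = - B 4 5 + B 5 4 + B 6 3 + C 3 5 - C 4 6 - C 5 3 + C 6 4 - 2 * w + 2 * x"
    and "C 3 6 = - C 4 5 + C 5 4 + C 6 3 + y + z"
    and "A 3 5 = A 4 6 - C 5 5 - C 6 6"
  shows "theta A omega1 [X, Y] = theta B omega7 [X, Y] + x * omega1 [X, Y] + y * omega2 [X, Y]"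
  unfolding theta2 omega1_def omega2_def omega7_def eform2 matapp_def
  by (simp add: s36 assms algebra_simps)

lemma cback2:
  fixes x y z w :: real and A B C :: mat4
  assumes "B 5 3 = B 6 4 + C 5 4 + C 6 3"
    and "B 4 3 = - B 6 5 - C 3 3 - C 5 5"
    and "B 3 3 = - B 6 6 + C 4 3 - C 5 6"
    and "B 4 4 = - B 5 5 - C 3 4 + C 6 5"
    and "B 3 4 = - B 5 6 + C 4 4 + C 6 6"
    and "B 3 5 = B 4 6 + C 5 4 + C 6 3 + y + z"
    and "A 5 4 = - A 6 3 - B 5 5 - B 6 6 - C 3 4 + C 4 3 - C 5 6 + C 6 5"
    and "A 3 3 = - A 6 6 - C 4 6 - C 5 3 - w"
    and "A 4 3 = - A 6 5 - C 4 5 + C 6 3 + z"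
    and "A 3 4 = A 6 5 - B 4 6 - B 6 4 - C 5 4 - C 6 3 - z"
    and "A 4 4 = - A 6 6 - B 4 5 + B 6 3 + C 3 5 - C 4 6 - C 5 3 + C 6 4 - 2 * w + x"
    and "A 3 6 = - A 4 5 - B 5 5 - B 6 6"
    and "A 5 3 = A 6 4 + C 3 3 + C 4 4"
    and "A 5 6 = - A 6 5 + B 4 6 + B 6 4 - C 4 5 + C 5 4 + 2 * C 6 3 + y + z"
    and "A 5 5 = A 6 6 + B 4 5 - B 6 3 + C 4 6 + C 5 3 + w - x"
    and "B 3 6 = - B 4 5 + B 5 4 + B 6 3 + C 3 5 - C 4 6 - C 5 3 + C 6 4 - 2 * w + 2 * x"
    and "C 3 6 = - C 4 5 + C 5 4 + C 6 3 + y + z"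
    and "A 3 5 = A 4 6 - C 5 5 - C 6 6"
  shows "theta A omega2 [X, Y] = theta C omega7 [X, Y] + z * omega1 [X, Y] + w * omega2 [X, Y]"
  unfolding theta2 omega1_def omega2_def omega7_def eform2 matapp_def
  by (simp add: s36 assms algebra_simps)

lemma cback3:
  fixes x y z w :: real and A B C :: mat4
  assumes "B 5 3 = B 6 4 + C 5 4 + C 6 3"
    and "B 4 3 = - B 6 5 - C 3 3 - C 5 5"
    and "B 3 3 = - B 6 6 + C 4 3 - C 5 6"
    and "B 4 4 = - B 5 5 - C 3 4 + C 6 5"
    and "B 3 4 = - B 5 6 + C 4 4 + C 6 6"
    and "B 3 5 = B 4 6 + C 5 4 + C 6 3 + y + z"
    and "A 5 4 = - A 6 3 - B 5 5 - B 6 6 - C 3 4 + C 4 3 - C 5 6 + C 6 5"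
    and "A 3 3 = - A 6 6 - C 4 6 - C 5 3 - w"
    and "A 4 3 = - A 6 5 - C 4 5 + C 6 3 + z"
    and "A 3 4 = A 6 5 - B 4 6 - B 6 4 - C 5 4 - C 6 3 - z"
    and "A 4 4 = - A 6 6 - B 4 5 + B 6 3 + C 3 5 - C 4 6 - C 5 3 + C 6 4 - 2 * w + x"
    and "A 3 6 = - A 4 5 - B 5 5 - B 6 6"
    and "A 5 3 = A 6 4 + C 3 3 + C 4 4"
    and "A 5 6 = - A 6 5 + B 4 6 + B 6 4 - C 4 5 + C 5 4 + 2 * C 6 3 + y + z"
    and "A 5 5 = A 6 6 + B 4 5 - B 6 3 + C 4 6 + C 5 3 + w - x"
    and "B 3 6 = - B 4 5 + B 5 4 + B 6 3 + C 3 5 - C 4 6 - C 5 3 + C 6 4 - 2 * w + 2 * x"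
    and "C 3 6 = - C 4 5 + C 5 4 + C 6 3 + y + z"
    and "A 3 5 = A 4 6 - C 5 5 - C 6 6"
  shows "theta B omega2 [X, Y] = theta C omega1 [X, Y]"
  unfolding theta2 omega1_def omega2_def omega7_def eform2 matapp_def
  by (simp add: s36 assms algebra_simps)

theorem corollary2p5:
  fixes x y z w :: real and A B C :: mat4
  assumes "mtrace B = 0" and "mtrace C = 0"
    and "\<forall>i\<in>{3..6}. \<forall>k\<in>{3..6}. mcomm A B i k = x * B i k + y * C i k"
    and "\<forall>i\<in>{3..6}. \<forall>k\<in>{3..6}. mcomm A C i k = z * B i k + w * C i k"
    and "\<forall>i\<in>{3..6}. \<forall>k\<in>{3..6}. mcomm B C i k = 0"
  shows "(\<forall>Xs. length Xs = 4 \<and> (\<forall>X\<in>set Xs. in_g X) \<longrightarrow> dext x y z w A B C phi Xs = 0)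
     \<longleftrightarrow>
     ((\<forall>X Y. in_g1 X \<and> in_g1 Y \<longrightarrow>
         theta A omega1 [X, Y] = theta B omega7 [X, Y] + x * omega1 [X, Y] + y * omega2 [X, Y])
    \<and> (\<forall>X Y. in_g1 X \<and> in_g1 Y \<longrightarrow>
         theta A omega2 [X, Y] = theta C omega7 [X, Y] + z * omega1 [X, Y] + w * omega2 [X, Y])
    \<and> (\<forall>X Y. in_g1 X \<and> in_g1 Y \<longrightarrow>
         theta B omega2 [X, Y] = theta C omega1 [X, Y]))"
proof -
  have P: "(\<forall>X Y. in_g1 X \<and> in_g1 Y \<longrightarrow> theta A omega1 [X, Y] = theta B omega7 [X, Y] + x * omega1 [X, Y] + y * omega2 [X, Y]) \<and>
    (\<forall>X Y. in_g1 X \<and> in_g1 Y \<longrightarrow> theta A omega2 [X, Y] = theta C omega7 [X, Y] + z * omega1 [X, Y] + w * omega2 [X, Y]) \<and>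
    (\<forall>X Y. in_g1 X \<and> in_g1 Y \<longrightarrow> theta B omega2 [X, Y] = theta C omega1 [X, Y])" if "pivs x y z w A B C"
    using that unfolding pivs_def
    apply (intro conjI allI impI)
      apply (rule cback1[where x=x and y=y and z=z and w=w and A=A and B=B and C=C]; simp)
     apply (rule cback2[where x=x and y=y and z=z and w=w and A=A and B=B and C=C]; simp)
    apply (rule cback3[where x=x and y=y and z=z and w=w and A=A and B=B and C=C]; simp)
    done
  show ?thesis
  proof
    assume "\<forall>Xs. length Xs = 4 \<and> (\<forall>X\<in>set Xs. in_g X) \<longrightarrow> dext x y z w A B C phi Xs = 0"
    then show "(\<forall>X Y. in_g1 X \<and> in_g1 Y \<longrightarrow> theta A omega1 [X, Y] = theta B omega7 [X, Y] + x * omega1 [X, Y] + y * omega2 [X, Y]) \<and>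
    (\<forall>X Y. in_g1 X \<and> in_g1 Y \<longrightarrow> theta A omega2 [X, Y] = theta C omega7 [X, Y] + z * omega1 [X, Y] + w * omega2 [X, Y]) \<and>
    (\<forall>X Y. in_g1 X \<and> in_g1 Y \<longrightarrow> theta B omega2 [X, Y] = theta C omega1 [X, Y])" using forward P by blast
  next
    assume "(\<forall>X Y. in_g1 X \<and> in_g1 Y \<longrightarrow> theta A omega1 [X, Y] = theta B omega7 [X, Y] + x * omega1 [X, Y] + y * omega2 [X, Y]) \<and>
    (\<forall>X Y. in_g1 X \<and> in_g1 Y \<longrightarrow> theta A omega2 [X, Y] = theta C omega7 [X, Y] + z * omega1 [X, Y] + w * omega2 [X, Y]) \<and>
    (\<forall>X Y. in_g1 X \<and> in_g1 Y \<longrightarrow> theta B omega2 [X, Y] = theta C omega1 [X, Y])"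
    then have "pivs x y z w A B C" using cforward by blast
    then show "\<forall>Xs. length Xs = 4 \<and> (\<forall>X\<in>set Xs. in_g X) \<longrightarrow> dext x y z w A B C phi Xs = 0"
      using backward by blast
  qed
qed

end
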